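(* Let $p,q,r\ge1$ and $E$ be positive integers, $A\in[-E,E]^{p\times q}$ and $B\in[-E,E]^{q\times r}$ integer matrices, and set $A_{p,j}:=0$ for all $j$. Let the alphabet consist of pairwise distinct characters $x_0,\dots,x_{p-1},x_p^{(0)},\dots,x_p^{(r-1)},x_{p+1},\dots,x_{2p},y_0,\dots,y_{2p+q-1}$. For $\ell\in[0,r)$ let $X_\ell:=x_0\cdots x_{p-1}x_p^{(\ell)}x_{p+1}\cdots x_{2p}$ (length $2p+1$) and $Y:=y_0\cdots y_{2p+q-1}$. Let $D,F$ be positive integers with $E\ll D\ll F$, where $a\ll b$ means $a(|X_\ell|+|Y|)<b$. Define the weight function $w$ by: $w(\sigma,\varepsilon)=w(\varepsilon,\sigma)=F$ for every character $\sigma$; $w(x_i,y_{i+j})=F+A_{i,j}-A_{i+1,j}+(q-j)D$ for $i\in[0,p)$, $j\in[0,q)$; $w(x_p^{(\ell)},y_{p+j})=F+B_{j,\ell}$ for $j\in[0,q)$; $w(x_{p+i},y_{p+i+j})=F+(j+1)D$ for $i\in[1,p]$, $j\in[0,q)$; $w(\sigma,\sigma)=0$; and $w(\sigma,\rho)=2F$ for all other pairs. Then for every $\ell\in[0,r)$ and every $i\in[0,p)$, $$\mathrm{ed}^w\big(X_\ell[i\,.\,.\,|X_\ell|-i),Y\big)=|Y|\,F+(p-i)(q+1)D+\min_j\{A_{i,j}+B_{j,\ell}\},$$ and an optimal alignment deletes no characters of $X_\ell$.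
   Context: $X[a\,.\,.\,b)$ denotes the fragment $X[a]\cdots X[b-1]$. $\mathrm{ed}^w(X,Y)$ is the minimum total cost of an alignment of $X$ onto $Y$, i.e., of a monotone lattice path from $(0,0)$ to $(|X|,|Y|)$ with steps $(1,0)$ from $(x,y)$ (deleting $X[x]$, cost $w(X[x],\varepsilon)$), $(0,1)$ (inserting $Y[y]$, cost $w(\varepsilon,Y[y])$), and $(1,1)$ (aligning $X[x]$ to $Y[y]$, cost $w(X[x],Y[y])$). *)

theory Defs
  imports Main
begin

text \<open>Characters of the alphabet: Xc i is x_i (used for i in [0,p) and [p+1,2p]),
  Xp l is x_p^(l), Yc k is y_k. Distinct constructors/arguments give pairwise distinct characters.\<close>
datatype chr = Xc nat | Xp nat | Yc nat

datatype step = Del | Ins | Match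

text \<open>Weight functions: None stands for the empty string epsilon.\<close>
type_synonym weight = "chr option \<Rightarrow> chr option \<Rightarrow> int"

fun acost :: "weight \<Rightarrow> chr list \<Rightarrow> chr list \<Rightarrow> step list \<Rightarrow> int option" where
  "acost w [] [] [] = Some 0"
| "acost w (x # xs) ys (Del # ss) = map_option ((+) (w (Some x) None)) (acost w xs ys ss)"
| "acost w xs (y # ys) (Ins # ss) = map_option ((+) (w None (Some y))) (acost w xs ys ss)"
| "acost w (x # xs) (y # ys) (Match # ss) = map_option ((+) (w (Some x) (Some y))) (acost w xs ys ss)"
| "acost w _ _ _ = None"

definition ed_w :: "weight \<Rightarrow> chr list \<Rightarrow> chr list \<Rightarrow> int" where
  "ed_w w X Y = Min {c. \<exists>ss. acost w X Y ss = Some c}"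

definition frag :: "'a list \<Rightarrow> nat \<Rightarrow> nat \<Rightarrow> 'a list" where
  "frag X a b = drop a (take b X)"

definition Xword :: "nat \<Rightarrow> nat \<Rightarrow> chr list" where
  "Xword p l = map (\<lambda>k. if k = p then Xp l else Xc k) [0..<2*p+1]"

definition Yword :: "nat \<Rightarrow> nat \<Rightarrow> chr list" where
  "Yword p q = map Yc [0..<2*p+q]"

definition Aext :: "nat \<Rightarrow> (nat \<Rightarrow> nat \<Rightarrow> int) \<Rightarrow> nat \<Rightarrow> nat \<Rightarrow> int" where
  "Aext p A i j = (if i = p then 0 else A i j)"

definition wgt :: "nat \<Rightarrow> nat \<Rightarrow> (nat \<Rightarrow> nat \<Rightarrow> int) \<Rightarrow> (nat \<Rightarrow> nat \<Rightarrow> int)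
    \<Rightarrow> int \<Rightarrow> int \<Rightarrow> weight" where
  "wgt p q A B D F a b =
    (case (a, b) of
       (Some s, None) \<Rightarrow> F
     | (None, Some s) \<Rightarrow> F
     | (None, None) \<Rightarrow> 0
     | (Some s, Some t) \<Rightarrow>
         (if s = t then 0 else
          (case (s, t) of
             (Xc i, Yc k) \<Rightarrow>
                (if i < p \<and> i \<le> k \<and> k < i + q then
                   F + Aext p A i (k - i) - Aext p A (i + 1) (k - i) + int (q - (k - i)) * D
                 else if p + 1 \<le> i \<and> i \<le> 2 * p \<and> i \<le> k \<and> k < i + q then
                   F + int (k - i + 1) * D
                 else 2 * F)
           | (Xp l, Yc k) \<Rightarrow> (if p \<le> k \<and> k < p + q then F + B (k - p) l else 2 * F)
           | _ \<Rightarrow> 2 * F)))"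

end

theory Submission
  imports Defs
begin

lemma acost_len: "acost w xs ys ss = Some c \<Longrightarrow> length ss \<le> length xs + length ys"
  by (induction w xs ys ss arbitrary: c rule: acost.induct) auto

locale L61 =
  fixes p q :: nat and E D F :: int and A B :: "nat \<Rightarrow> nat \<Rightarrow> int" and l i :: nat
  assumes p1: "p \<ge> 1" and q1: "q \<ge> 1" and Epos: "E > 0" and Dpos: "D > 0" and Fpos: "F > 0"
    and Abnd: "\<forall>i<p. \<forall>j<q. -E \<le> A i j \<and> A i j \<le> E"
    and Bbnd: "\<forall>j<q. -E \<le> B j l \<and> B j l \<le> E"
    and ED: "E * int ((2*p+1) + (2*p+q)) < D"
    and DF: "D * int ((2*p+1) + (2*p+q)) < F"
    and ip: "i < p"
begin

definition NX where "NX = 2*p+1-i"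
definition MY where "MY = 2*p+q"
definition fx where "fx k = (if k = p then Xp l else Xc k)"
definition cl :: "nat \<Rightarrow> nat \<Rightarrow> int" where "cl s k = max 0 (min (int q - 1) (int k - int s))"
definition RR where "RR s = NX - max s (p+1)"
definition P where "P s k = int (p - s) * (int q - cl s k) + int (RR s) * (cl s k + 1)"
definition H where "H s k = (if s = i then (MIN j\<in>{nat (cl s k)..<q}. A i j + B j l)
   else if s \<le> p then Aext p A s (nat (cl s k)) + B (nat (cl s k)) l else 0)"
definition G where "G s k = D * P s k + H s k"

lemma E4D: "4 * E < D"
proof -
  have "E * 4 \<le> E * int ((2*p+1) + (2*p+q))" using p1 Epos by (intro mult_left_mono) auto
  then show ?thesis using ED by linarith
qed

lemma DF2: "D * (int p + int q + 1) + D \<le> F"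
proof -
  have "D * (int p + int q + 2) \<le> D * int ((2*p+1) + (2*p+q))" using p1 Dpos by (intro mult_left_mono) auto
  then show ?thesis using DF by (simp add: algebra_simps)
qed

lemma cl_bnd: "0 \<le> cl s k" "cl s k \<le> int q - 1" "nat (cl s k) < q"
  using q1 by (auto simp: cl_def)

lemma Hbnd: "-2*E \<le> H s k \<and> H s k \<le> 2*E"
proof -
  have c: "nat (cl s k) < q" by (rule cl_bnd)
  show ?thesis
  proof (cases "s = i")
    case True
    let ?S = "(\<lambda>j. A i j + B j l) ` {nat (cl s k)..<q}"
    have "Min ?S \<in> ?S" using c by (intro Min_in) auto
    then obtain j where j: "j < q" "Min ?S = A i j + B j l" by auto
    have "-E \<le> A i j" "A i j \<le> E" "-E \<le> B j l" "B j l \<le> E" using Abnd Bbnd ip j(1) by auto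
    moreover have "H s k = A i j + B j l" using True j(2) by (simp add: H_def)
    ultimately show ?thesis by linarith
  next
    case False
    let ?j = "nat (cl s k)"
    have b: "-E \<le> B ?j l" "B ?j l \<le> E" using Bbnd c by auto
    show ?thesis
    proof (cases "s < p")
      case True
      have "-E \<le> A s ?j" "A s ?j \<le> E" using Abnd True c by auto
      then show ?thesis using False True b by (simp add: H_def Aext_def)
    next
      case nl: False
      then show ?thesis using False b Epos by (cases "s = p") (simp_all add: H_def Aext_def)
    qed
  qed
qed

lemma NX_gt: "NX \<ge> p + 2" using ip by (simp add: NX_def)

lemma P_Suc_eq: "cl s (Suc k) = cl s k \<Longrightarrow> P s (Suc k) = P s k"
  by (simp add: P_def)
lemma H_Suc_eq: "cl s (Suc k) = cl s k \<Longrightarrow> H s (Suc k) = H s k"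
  by (cases "s = i") (simp_all add: H_def)

lemma RR_le: "RR s \<le> p" using ip by (simp add: RR_def NX_def)

lemma P_del: assumes "s < NX" shows "P s k - P (Suc s) k \<le> int q + int p"
proof -
  let ?c = "cl s k" and ?c2 = "cl (Suc s) k"
  have cc: "?c2 = ?c \<or> ?c2 = ?c - 1" by (auto simp: cl_def)
  have cb: "0 \<le> ?c" "?c \<le> int q - 1" using cl_bnd by auto
  have R: "int (RR s) \<le> int p" using RR_le by simp
  consider (a) "s < p" | (b) "s = p" | (c) "s > p" by linarith
  then show ?thesis
  proof cases
    case a
    have L: "int (p - Suc s) = int (p - s) - 1" "int (p - s) \<ge> 1" using a by auto
    have RS: "RR (Suc s) = RR s" using a by (simp add: RR_def)
    from cc show ?thesis
    proof
      assume e: "?c2 = ?c"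
      have "P s k - P (Suc s) k = int q - ?c" unfolding P_def e RS L(1) by (simp add: algebra_simps)
      then show ?thesis using cb by linarith
    next
      assume e: "?c2 = ?c - 1"
      have "P s k - P (Suc s) k = int q - ?c - int (p - s) + 1 + int (RR s)"
        unfolding P_def e RS L(1) by (simp add: algebra_simps)
      then show ?thesis using cb L R by linarith
    qed
  next
    case b
    have RS: "RR (Suc s) = RR s" using b by (simp add: RR_def)
    have L: "p - s = 0" "p - Suc s = 0" using b by auto
    have "P s k - P (Suc s) k = int (RR s) * (?c - ?c2)" unfolding P_def RS L by (simp add: algebra_simps)
    moreover have "int (RR s) * (?c - ?c2) \<le> int (RR s) * 1" using cc by (intro mult_left_mono) auto
    ultimately show ?thesis using R by linarith
  next
    case c
    have RS: "int (RR (Suc s)) = int (RR s) - 1" using c assms by (simp add: RR_def)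
    have L: "p - s = 0" "p - Suc s = 0" using c by auto
    have "P s k - P (Suc s) k = int (RR s) * (?c - ?c2) + ?c2 + 1" unfolding P_def RS L by (simp add: algebra_simps)
    moreover have "int (RR s) * (?c - ?c2) \<le> int (RR s) * 1" using cc by (intro mult_left_mono) auto
    ultimately show ?thesis using R cc cb by linarith
  qed
qed

lemma G_del: assumes "s < NX" shows "G s k \<le> F + G (Suc s) k"
proof -
  have "D * (P s k - P (Suc s) k) \<le> D * (int q + int p)" using P_del[OF assms] Dpos by (intro mult_left_mono) auto
  moreover have "-2*E \<le> H s k \<and> H s k \<le> 2*E" "-2*E \<le> H (Suc s) k \<and> H (Suc s) k \<le> 2*E"
      using Hbnd by auto
  ultimately show ?thesis using DF2 E4D by (simp add: G_def algebra_simps)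
qed

lemma G_ins: assumes "i \<le> s" "s \<le> NX" shows "G s k \<le> G s (Suc k)"
proof -
  have cases: "cl s (Suc k) = cl s k \<or> cl s (Suc k) = cl s k + 1" by (auto simp: cl_def)
  then show ?thesis
  proof
    assume "cl s (Suc k) = cl s k"
    then show ?thesis by (simp add: G_def P_Suc_eq H_Suc_eq)
  next
    assume c1: "cl s (Suc k) = cl s k + 1"
    have Pd: "P s (Suc k) - P s k = int (RR s) - int (p - s)"
      using c1 by (simp add: P_def algebra_simps)
    have hb: "-2*E \<le> H s k \<and> H s k \<le> 2*E" "-2*E \<le> H s (Suc k) \<and> H s (Suc k) \<le> 2*E"
      using Hbnd by auto
    show ?thesis
    proof (cases "s = i")
      case True
      have "RR s = p - s" using True ip by (simp add: RR_def NX_def)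
      then have Pe: "P s (Suc k) = P s k" using Pd by simp
      have lt: "nat (cl s (Suc k)) < q" by (rule cl_bnd)
      have "{nat (cl s (Suc k))..<q} \<subseteq> {nat (cl s k)..<q}" using c1 cl_bnd(1)[of s k] by auto
      then have "(MIN j\<in>{nat (cl s k)..<q}. A i j + B j l) \<le> (MIN j\<in>{nat (cl s (Suc k))..<q}. A i j + B j l)"
        using lt by (intro Min_antimono) auto
      then have "H s k \<le> H s (Suc k)" using True by (simp add: H_def)
      then show ?thesis using Pe by (simp add: G_def)
    next
      case False
      show ?thesis
      proof (cases "s = NX")
        case True
        have "RR s = 0" "p - s = 0" using True NX_gt by (auto simp: RR_def)
        moreover have "H s k = 0" "H s (Suc k) = 0" using True NX_gt False by (auto simp: H_def)
        ultimately show ?thesis using Pd by (simp add: G_def)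
      next
        case nN: False
        have "int (RR s) - int (p - s) \<ge> 1" using nN False assms ip NX_gt
          by (auto simp: RR_def NX_def)
        then have "D * 1 \<le> D * (P s (Suc k) - P s k)" using Pd Dpos by (intro mult_left_mono) auto
        then show ?thesis using hb E4D by (simp add: G_def algebra_simps)
      qed
    qed
  qed
qed

lemma cl_SS: "cl (Suc s) (Suc k) = cl s k" by (simp add: cl_def)

lemma G_match: assumes "i \<le> s" "s < NX"
  shows "G s k \<le> wgt p q A B D F (Some (fx s)) (Some (Yc k)) - F + G (Suc s) (Suc k)"
proof -
  let ?c = "cl s k"
  have cb: "0 \<le> ?c" "?c \<le> int q - 1" using cl_bnd by auto
  have hb: "-2*E \<le> H s k \<and> H s k \<le> 2*E" "-2*E \<le> H (Suc s) (Suc k) \<and> H (Suc s) (Suc k) \<le> 2*E"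
      using Hbnd by auto
  have s2p: "s \<le> 2*p" using assms ip by (simp add: NX_def)
  show ?thesis
  proof (cases "s \<le> k \<and> k < s + q")
    case False
    have w: "wgt p q A B D F (Some (fx s)) (Some (Yc k)) = 2 * F"
      using False by (auto simp: wgt_def fx_def)
    have eq: "P s k - P (Suc s) (Suc k) = (int (p - s) - int (p - Suc s)) * (int q - ?c) + (int (RR s) - int (RR (Suc s))) * (?c + 1)"
      unfolding P_def cl_SS by (simp add: algebra_simps)
    have i1: "(int (p - s) - int (p - Suc s)) * (int q - ?c) \<le> 1 * (int q - ?c)"
      using cb by (intro mult_right_mono) auto
    have i2: "(int (RR s) - int (RR (Suc s))) * (?c + 1) \<le> 1 * (?c + 1)"
      using cb by (intro mult_right_mono) (auto simp: RR_def)
    have "P s k - P (Suc s) (Suc k) \<le> 1 * (int q - ?c) + 1 * (?c + 1)"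
      unfolding eq by (rule add_mono[OF i1 i2])
    then have "P s k - P (Suc s) (Suc k) \<le> int q + 1" by simp
    then have "D * (P s k - P (Suc s) (Suc k)) \<le> D * (int p + int q + 1)" using Dpos by (intro mult_left_mono) auto
    then show ?thesis using w hb DF2 E4D by (simp add: G_def algebra_simps)
  next
    case True
    define j where "j = k - s"
    have cj: "?c = int j" "nat ?c = j" using True by (auto simp: cl_def j_def)
    have jq: "j < q" using True unfolding j_def by linarith
    consider (a) "s < p" | (b) "s = p" | (c) "s > p" by linarith
    then show ?thesis
    proof cases
      case a
      have w: "wgt p q A B D F (Some (fx s)) (Some (Yc k)) = F + Aext p A s j - Aext p A (s + 1) j + int (q - j) * D"
        using True a by (simp add: wgt_def fx_def j_def)
      have RS: "RR (Suc s) = RR s" using a by (simp add: RR_def)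
      have L: "int (p - Suc s) = int (p - s) - 1" using a by auto
      have Pd: "P s k = P (Suc s) (Suc k) + (int q - int j)" unfolding P_def cl_SS RS L cj(1) by (simp add: algebra_simps)
      have H2: "H (Suc s) (Suc k) = Aext p A (Suc s) j + B j l" using a assms cj by (simp add: H_def cl_SS)
      have H1: "H s k \<le> A s j + B j l"
      proof (cases "s = i")
        case True
        then show ?thesis using cj jq by (simp add: H_def)
      next
        case False
        then show ?thesis using cj a by (simp add: H_def Aext_def)
      qed
      have "Aext p A s j = A s j" using a by (simp add: Aext_def)
      then have w': "wgt p q A B D F (Some (fx s)) (Some (Yc k)) = F + A s j - Aext p A (Suc s) j + D * (int q - int j)"
        using w jq by (simp add: of_nat_diff algebra_simps)
      have DP: "D * P s k = D * P (Suc s) (Suc k) + D * (int q - int j)" unfolding Pd by (simp add: algebra_simps)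
      show ?thesis unfolding G_def using w' DP H1 H2 by linarith
    next
      case b
      have w: "wgt p q A B D F (Some (fx s)) (Some (Yc k)) = F + B j l"
        using True b by (simp add: wgt_def fx_def j_def)
      have RS: "RR (Suc s) = RR s" using b by (simp add: RR_def)
      have L: "p - s = 0" "p - Suc s = 0" using b by auto
      have Pd: "P s k = P (Suc s) (Suc k)" unfolding P_def cl_SS RS L by simp
      have "H (Suc s) (Suc k) = 0" using b ip by (simp add: H_def)
      moreover have "H s k = B j l" using b ip cj by (simp add: H_def Aext_def)
      ultimately show ?thesis using w Pd by (simp add: G_def)
    next
      case c
      have w: "wgt p q A B D F (Some (fx s)) (Some (Yc k)) = F + int (j + 1) * D"
        using True c s2p by (simp add: wgt_def fx_def j_def)
      have RS: "int (RR (Suc s)) = int (RR s) - 1" using c assms by (simp add: RR_def)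
      have L: "p - s = 0" "p - Suc s = 0" using c by auto
      have Pd: "P s k = P (Suc s) (Suc k) + (int j + 1)" unfolding P_def cl_SS RS L cj(1) by (simp add: algebra_simps)
      have "H (Suc s) (Suc k) = 0" "H s k = 0" using c ip by (auto simp: H_def)
      then show ?thesis using w Pd by (simp add: G_def algebra_simps)
    qed
  qed
qed

lemma G_end: "G NX k = 0"
  using NX_gt ip by (simp add: G_def P_def RR_def H_def)

lemma w_del: "wgt p q A B D F (Some x) None = F" by (simp add: wgt_def)
lemma w_ins: "wgt p q A B D F None (Some y) = F" by (simp add: wgt_def)

lemma lower: "acost (wgt p q A B D F) (map fx [s..<NX]) (map Yc [k..<MY]) ss = Some c \<Longrightarrow> i \<le> s \<Longrightarrow> s \<le> NX \<Longrightarrow> k \<le> MY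
  \<Longrightarrow> int (MY - k) * F + G s k \<le> c"
proof (induction ss arbitrary: s k c)
  case Nil
  then have "s = NX" by (cases "s < NX") (auto simp: upt_conv_Cons)
  moreover have "k = MY" using Nil \<open>s = NX\<close> by (cases "k < MY") (auto simp: upt_conv_Cons)
  ultimately show ?case using Nil G_end by simp
next
  case (Cons st ss)
  show ?case
  proof (cases st)
    case Del
    have sN: "s < NX" using Cons Del by (cases "s < NX") auto
    then obtain c' where c': "acost (wgt p q A B D F) (map fx [Suc s..<NX]) (map Yc [k..<MY]) ss = Some c'" "c = F + c'"
      using Cons.prems(1) Del by (auto simp: upt_conv_Cons w_del)
    have "int (MY - k) * F + G (Suc s) k \<le> c'" using Cons.IH[OF c'(1)] Cons.prems sN by simp
    then show ?thesis using G_del[OF sN, of k] c'(2) by linarith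
  next
    case Ins
    have kM: "k < MY" using Cons Ins by (cases "k < MY") auto
    then obtain c' where c': "acost (wgt p q A B D F) (map fx [s..<NX]) (map Yc [Suc k..<MY]) ss = Some c'" "c = F + c'"
      using Cons.prems(1) Ins by (auto simp: upt_conv_Cons w_ins)
    have "int (MY - Suc k) * F + G s (Suc k) \<le> c'" using Cons.IH[OF c'(1)] Cons.prems kM by simp
    moreover have "int (MY - k) * F = int (MY - Suc k) * F + F" using kM by (simp add: of_nat_diff algebra_simps)
    ultimately show ?thesis using G_ins[of s k] Cons.prems c'(2) by linarith
  next
    case Match
    have sN: "s < NX" using Cons Match by (cases "s < NX") auto
    have kM: "k < MY" using Cons Match sN by (cases "k < MY") (auto simp: upt_conv_Cons)
    obtain c' where c': "acost (wgt p q A B D F) (map fx [Suc s..<NX]) (map Yc [Suc k..<MY]) ss = Some c'"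
       "c = wgt p q A B D F (Some (fx s)) (Some (Yc k)) + c'"
      using Cons.prems(1) Match sN kM by (auto simp: upt_conv_Cons)
    have "int (MY - Suc k) * F + G (Suc s) (Suc k) \<le> c'" using Cons.IH[OF c'(1)] Cons.prems kM sN by simp
    moreover have "int (MY - k) * F = int (MY - Suc k) * F + F" using kM by (simp add: of_nat_diff algebra_simps)
    ultimately show ?thesis using G_match[of s k] Cons.prems sN c'(2) by linarith
  qed
qed

lemma ins_path: "k + d \<le> MY \<Longrightarrow> acost (wgt p q A B D F) xs (map Yc [k..<MY]) (replicate d Ins @ ss)
   = map_option ((+) (int d * F)) (acost (wgt p q A B D F) xs (map Yc [k+d..<MY]) ss)"
proof (induction d arbitrary: k)
  case 0
  then show ?case by (simp add: option.map_ident)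
next
  case (Suc d)
  then have kM: "k < MY" by simp
  have "acost (wgt p q A B D F) xs (map Yc [k..<MY]) (replicate (Suc d) Ins @ ss)
     = map_option ((+) F) (acost (wgt p q A B D F) xs (map Yc [Suc k..<MY]) (replicate d Ins @ ss))"
    using kM by (simp add: upt_conv_Cons w_ins)
  also have "\<dots> = map_option ((+) F) (map_option ((+) (int d * F)) (acost (wgt p q A B D F) xs (map Yc [Suc k+d..<MY]) ss))"
    using Suc by simp
  finally show ?case by (simp add: option.map_comp o_def algebra_simps)
qed

lemma match_path: "NX - s = d \<Longrightarrow> s \<le> NX \<Longrightarrow> NX + j \<le> MY \<Longrightarrow>
  acost (wgt p q A B D F) (map fx [s..<NX]) (map Yc [s+j..<MY]) (replicate (NX - s) Match @ replicate (MY - NX - j) Ins)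
   = Some ((\<Sum>t\<in>{s..<NX}. wgt p q A B D F (Some (fx t)) (Some (Yc (t+j)))) + int (MY-NX-j) * F)"
proof (induction d arbitrary: s)
  case 0
  then have "s = NX" by simp
  then show ?case using ins_path[of "NX + j" "MY - NX - j" "[]" "[]"] 0 by simp
next
  case (Suc d)
  then have sN: "s < NX" by simp
  have e1: "NX - s = Suc (NX - Suc s)" using sN by simp
  have IH: "acost (wgt p q A B D F) (map fx [Suc s..<NX]) (map Yc [Suc s+j..<MY]) (replicate (NX - Suc s) Match @ replicate (MY - NX - j) Ins)
   = Some ((\<Sum>t\<in>{Suc s..<NX}. wgt p q A B D F (Some (fx t)) (Some (Yc (t+j)))) + int (MY-NX-j) * F)"
    by (rule Suc.IH) (use Suc.prems in auto)
  have "s + j < MY" using sN Suc by simp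
  then show ?case unfolding e1 using sN IH
    by (simp add: upt_conv_Cons sum.atLeast_Suc_lessThan algebra_simps)
qed

lemma path_sum: assumes jq: "j < q"
  shows "(\<Sum>t\<in>{i..<NX}. wgt p q A B D F (Some (fx t)) (Some (Yc (t+j))))
     = int (NX - i) * F + int ((p-i)*(q+1)) * D + A i j + B j l"
proof -
  let ?w = "\<lambda>t. wgt p q A B D F (Some (fx t)) (Some (Yc (t+j)))"
  have pN: "p < NX" using NX_gt by simp
  have s1: "sum ?w {i..<NX} = sum ?w {i..<p} + sum ?w {p..<NX}"
    using ip pN by (simp add: sum.atLeastLessThan_concat)
  have s2: "sum ?w {p..<NX} = ?w p + sum ?w {Suc p..<NX}"
    using pN by (simp add: sum.atLeast_Suc_lessThan)
  have wl: "?w t = (F + (int q - int j) * D) + (Aext p A t j - Aext p A (Suc t) j)" if "t \<in> {i..<p}" for t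
    using that jq by (simp add: wgt_def fx_def Aext_def of_nat_diff)
  have tel: "(\<Sum>t=i..<p. Aext p A t j - Aext p A (Suc t) j) = Aext p A i j - Aext p A p j"
    using sum_Suc_diff'[of i p "\<lambda>t. - Aext p A t j"] ip by simp
  have "sum ?w {i..<p} = (\<Sum>t=i..<p. (F + (int q - int j) * D) + (Aext p A t j - Aext p A (Suc t) j))"
    by (rule sum.cong[OF refl wl])
  also have "\<dots> = int (p - i) * (F + (int q - int j) * D) + (Aext p A i j - Aext p A p j)"
    unfolding sum.distrib tel by (simp add: algebra_simps)
  finally have L: "sum ?w {i..<p} = int (p - i) * (F + (int q - int j) * D) + A i j"
    using ip by (simp add: Aext_def)
  have wm: "?w p = F + B j l" using jq by (simp add: wgt_def fx_def)
  have wr: "?w t = F + int (j+1) * D" if "t \<in> {Suc p..<NX}" for t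
  proof -
    have "t \<le> 2*p" "p < t" using that by (auto simp: NX_def)
    then show ?thesis using jq by (simp add: wgt_def fx_def)
  qed
  have R: "sum ?w {Suc p..<NX} = int (p - i) * (F + int (j+1) * D)"
  proof -
    have "sum ?w {Suc p..<NX} = (\<Sum>t=Suc p..<NX. F + int (j+1) * D)" by (rule sum.cong[OF refl wr])
    also have "\<dots> = int (NX - Suc p) * (F + int (j+1) * D)" by simp
    also have "NX - Suc p = p - i" by (simp add: NX_def)
    finally show ?thesis .
  qed
  have e1: "int (NX - i) = 2 * int (p - i) + 1" using ip by (auto simp: NX_def)
  have e2: "int ((p-i)*(q+1)) = int (p - i) * (int q + 1)" by (simp only: of_nat_mult of_nat_add of_nat_1)
  note e = e1 e2
  show ?thesis unfolding s1 s2 L R wm e by (simp add: algebra_simps)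
qed

lemma G_start: "G i 0 = int ((p-i)*(q+1)) * D + (MIN j\<in>{..<q}. A i j + B j l)"
proof -
  have c: "cl i 0 = 0" by (simp add: cl_def)
  have "RR i = p - i" using ip by (simp add: RR_def NX_def)
  then have "P i 0 = int (p-i) * (int q + 1)" unfolding P_def c by (simp add: algebra_simps)
  also have "\<dots> = int ((p-i)*(q+1))" by (simp only: of_nat_mult of_nat_add of_nat_1)
  finally
  moreover have "H i 0 = (MIN j\<in>{..<q}. A i j + B j l)" unfolding H_def c by (simp add: atLeast0LessThan)
  ultimately show ?thesis by (simp add: G_def algebra_simps)
qed

lemma main_loc:
  shows "ed_w (wgt p q A B D F) (map fx [i..<NX]) (map Yc [0..<MY])
           = int MY * F + int ((p - i) * (q + 1)) * D + (MIN j\<in>{..<q}. A i j + B j l)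
       \<and> (\<exists>ss. acost (wgt p q A B D F) (map fx [i..<NX]) (map Yc [0..<MY]) ss
              = Some (ed_w (wgt p q A B D F) (map fx [i..<NX]) (map Yc [0..<MY])) \<and> Del \<notin> set ss)"
proof -
  let ?w = "wgt p q A B D F" and ?X = "map fx [i..<NX]" and ?Y = "map Yc [0..<MY]"
  let ?S = "{c. \<exists>ss. acost ?w ?X ?Y ss = Some c}"
  let ?T = "int MY * F + int ((p - i) * (q + 1)) * D + (MIN j\<in>{..<q}. A i j + B j l)"
  have fU: "finite (UNIV :: step set)"
  proof -
    have "x \<in> {Del, Ins, Match}" for x :: step by (cases x) auto
    then have "(UNIV :: step set) \<subseteq> {Del, Ins, Match}" by blast
    then show ?thesis by (rule finite_subset) simp
  qed
  have "?S \<subseteq> (\<lambda>ss. the (acost ?w ?X ?Y ss)) ` {ss. set ss \<subseteq> UNIV \<and> length ss \<le> length ?X + length ?Y}"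
  proof
    fix c assume "c \<in> ?S"
    then obtain ss where "acost ?w ?X ?Y ss = Some c" by auto
    then show "c \<in> (\<lambda>ss. the (acost ?w ?X ?Y ss)) ` {ss. set ss \<subseteq> UNIV \<and> length ss \<le> length ?X + length ?Y}"
      using acost_len by force
  qed
  then have fin: "finite ?S" by (rule finite_surj[OF finite_lists_length_le[OF fU]])
  let ?Im = "(\<lambda>j. A i j + B j l) ` {..<q}"
  have "(0::nat) \<in> {..<q}" using q1 by simp
  then have "{..<q} \<noteq> {}" by blast
  then have "Min ?Im \<in> ?Im" by (intro Min_in) auto
  then obtain j where j: "j < q" "(MIN j\<in>{..<q}. A i j + B j l) = A i j + B j l" by auto
  define ss0 where "ss0 = replicate (i+j) Ins @ replicate (NX - i) Match @ replicate (MY - NX - j) Ins"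
  have jM: "NX + j \<le> MY" using j ip by (simp add: NX_def MY_def)
  have ijM: "i + j \<le> MY" using jM ip by (simp add: NX_def)
  have "acost ?w ?X ?Y ss0 = map_option ((+) (int (i+j) * F)) (acost ?w ?X (map Yc [i+j..<MY]) (replicate (NX - i) Match @ replicate (MY - NX - j) Ins))"
    unfolding ss0_def using ins_path[of 0 "i+j"] ijM by simp
  also have "\<dots> = Some (int (i+j) * F + ((\<Sum>t\<in>{i..<NX}. ?w (Some (fx t)) (Some (Yc (t+j)))) + int (MY-NX-j) * F))"
    using match_path[of i "NX - i" j] jM ip by (simp add: NX_def)
  also have "\<dots> = Some ?T"
  proof -
    have "int (i+j) + int (NX - i) + int (MY-NX-j) = int MY" using jM ip by (simp add: NX_def)
    then have "int (i+j) * F + int (NX - i) * F + int (MY-NX-j) * F = int MY * F" by (metis distrib_right)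
    then show ?thesis unfolding path_sum[OF j(1)] j(2) by (simp add: algebra_simps)
  qed
  finally have a0: "acost ?w ?X ?Y ss0 = Some ?T" .
  have lb: "?T \<le> c" if "c \<in> ?S" for c
  proof -
    from that obtain ss where "acost ?w ?X ?Y ss = Some c" by auto
    from lower[OF this] have "int (MY - 0) * F + G i 0 \<le> c" using ip by (simp add: NX_def)
    then show ?thesis using G_start by (simp add: algebra_simps)
  qed
  have ed: "ed_w ?w ?X ?Y = ?T" unfolding ed_w_def
    using fin lb a0 by (intro Min_eqI) auto
  have "Del \<notin> set ss0" by (simp add: ss0_def)
  then show ?thesis using ed a0 by auto
qed

end

theorem lemma6p1:
  fixes p q r :: nat and E D F :: int
    and A B :: "nat \<Rightarrow> nat \<Rightarrow> int"
  assumes "p \<ge> 1" "q \<ge> 1" "r \<ge> 1" "E > 0" "D > 0" "F > 0"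
    and "\<forall>i<p. \<forall>j<q. -E \<le> A i j \<and> A i j \<le> E"
    and "\<forall>j<q. \<forall>l<r. -E \<le> B j l \<and> B j l \<le> E"
    and "E * int ((2*p+1) + (2*p+q)) < D"
    and "D * int ((2*p+1) + (2*p+q)) < F"
    and "l < r" and "i < p"
  shows "ed_w (wgt p q A B D F) (frag (Xword p l) i (length (Xword p l) - i)) (Yword p q)
           = int (length (Yword p q)) * F + int ((p - i) * (q + 1)) * D
             + (MIN j\<in>{..<q}. A i j + B j l)
       \<and> (\<exists>ss. acost (wgt p q A B D F) (frag (Xword p l) i (length (Xword p l) - i)) (Yword p q) ss
              = Some (ed_w (wgt p q A B D F) (frag (Xword p l) i (length (Xword p l) - i)) (Yword p q))
            \<and> Del \<notin> set ss)"
proof -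
  interpret L: L61 p q E D F A B l i
    using assms by unfold_locales auto
  have X: "frag (Xword p l) i (length (Xword p l) - i) = map L.fx [i..<L.NX]"
  proof -
    have e: "Xword p l = map L.fx [0..<2*p+1]" unfolding Xword_def L.fx_def[abs_def] ..
    have "take (2*p+1-i) [0..<2*p+1] = [0..<2*p+1-i]" by (simp del: upt_Suc)
    then show ?thesis unfolding e frag_def L.NX_def by (simp add: take_map drop_map del: upt_Suc)
  qed
  have Y: "Yword p q = map Yc [0..<L.MY]" by (simp add: Yword_def L.MY_def)
  have len: "length (map Yc [0..<L.MY]) = L.MY" by simp
  show ?thesis unfolding X Y len by (rule L.main_loc)
qed

end
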